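(* The kernel of $F_u(\lambda_0,0)$ is one-dimensional, namely $\ker(F_u(\lambda_0,0))=\mathbb{R}\cdot S(0,\Phi_0)$, and the transversality condition $F_{\lambda,u}(\lambda_0,0)[1,S(0,\Phi_0)]\notin\mathrm{rg}(F_u(\lambda_0,0))$ holds.
   Context: $E_0$ is a real Banach space ordered by a closed convex cone $E_0^+$, $E_1$ a Banach space densely and compactly embedded in $E_0$. Fix $p\in(1,\infty)$, $\varsigma:=1-1/p$, $E_\varsigma:=(E_0,E_1)_{\varsigma,p}$ (real interpolation); for $\theta\in(0,1)\setminus\{\varsigma\}$, $E_\theta:=(E_0,E_1)_\theta$ with an admissible interpolation functor ($E_1$ dense in $E_\theta$), $E_\theta^+:=E_\theta\cap E_0^+$, and $\mathrm{int}(E_\varsigma^+)\neq\emptyset$. $a_m\in(0,\infty]$, $J:=[0,a_m)$, $\mathbb{E}_0:=L_p(J,E_0)$, $\mathbb{E}_1:=L_p(J,E_1)\cap W^1_p(J,E_0)$, $\gamma_0u:=u(0)$, $\gamma_0\in\mathcal{L}(\mathbb{E}_1,E_\varsigma)$, $\mathbb{E}_1^+:=L_p^+(J,E_1)\cap W_p^1(J,E_0)$. $\mathbb{F}$ is a Banach space with $\mathbb{E}_1$ compactly embedded in $\mathbb{F}$, $\Sigma$ an open connected $0$-neighbourhood in $\mathbb{F}$, $\Sigma_1:=\Sigma\cap\mathbb{E}_1$. For some $\vartheta\in(\varsigma,1]$: $\mathcal{A}\in C^1(\Sigma,\mathcal{L}(\mathbb{E}_1,\mathbb{E}_0))$, $\ell\in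 C^1(\Sigma,\mathcal{L}(\mathbb{E}_1,E_\vartheta))$. Standing assumptions: for all $u\in\Sigma_1$, $(\partial_a+\mathcal{A}(u),\gamma_0)\in\mathrm{Isom}(\mathbb{E}_1,\mathbb{E}_0\times E_\varsigma)$ with inverse $T[u]$, and $T[u](0,\cdot)$ maps $E_\varsigma^+$ into $\mathbb{E}_1^+$; $Q(u):=\ell(u)T[u](0,\cdot)$; $\lambda_0^{-1}>0$ is a simple eigenvalue of $Q(0)$ with an eigenvector $\Phi_0\in\mathrm{int}(E_\varsigma^+)$, and $Q(0)$ has no other eigenvalue with eigenvector in $E_\varsigma^+$. $S:=T[0]$ and $F(\lambda,u):=u-S\big((\mathcal{A}(0)-\mathcal{A}(u))u,\lambda\ell(u)u\big)$ for $(\lambda,u)\in\mathbb{R}\times\Sigma_1$; $F_u$ and $F_{\lambda,u}$ denote Fréchet derivatives. *)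

theory Defs
  imports "HOL-Analysis.Analysis"
begin

definition compact_embedding :: "('x::real_normed_vector \<Rightarrow>\<^sub>L 'y::real_normed_vector) \<Rightarrow> bool" where
  "compact_embedding f \<longleftrightarrow> inj (blinfun_apply f) \<and> compact (closure (blinfun_apply f ` cball 0 1))"

definition dense_range :: "('x::real_normed_vector \<Rightarrow>\<^sub>L 'y::real_normed_vector) \<Rightarrow> bool" where
  "dense_range f \<longleftrightarrow> closure (range (blinfun_apply f)) = UNIV"

definition C1_on :: "'x::real_normed_vector set \<Rightarrow> ('x \<Rightarrow> 'y::real_normed_vector) \<Rightarrow> bool" where
  "C1_on U f \<longleftrightarrow> (\<exists>f'. (\<forall>x\<in>U. (f has_derivative blinfun_apply (f' x)) (at x)) \<and> continuous_on U f')"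

text \<open>Simple eigenvalue = algebraically simple: the generalized eigenspace
  (union of the kernels of the powers of Q - mu) is one-dimensional.\<close>
definition gen_eigenspace :: "('x::real_vector \<Rightarrow> 'x) \<Rightarrow> real \<Rightarrow> 'x set" where
  "gen_eigenspace Q \<mu> = {x. \<exists>k. ((\<lambda>y. Q y - \<mu> *\<^sub>R y) ^^ k) x = 0}"

definition simple_eigenvalue :: "('x::real_vector \<Rightarrow> 'x) \<Rightarrow> real \<Rightarrow> bool" where
  "simple_eigenvalue Q \<mu> \<longleftrightarrow> (\<exists>e. e \<noteq> 0 \<and> gen_eigenspace Q \<mu> = range (\<lambda>t. t *\<^sub>R e))"

definition is_eigenvector :: "('x::real_vector \<Rightarrow> 'x) \<Rightarrow> real \<Rightarrow> 'x \<Rightarrow> bool" where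
  "is_eigenvector Q \<mu> x \<longleftrightarrow> x \<noteq> 0 \<and> Q x = \<mu> *\<^sub>R x"

definition ordering_cone :: "'x::real_normed_vector set \<Rightarrow> bool" where
  "ordering_cone K \<longleftrightarrow> closed K \<and> convex_cone K \<and> K \<inter> uminus ` K = {0}"

text \<open>E1 is realised inside E0 through the embedding i1.\<close>
definition Kfun :: "('b::real_normed_vector \<Rightarrow>\<^sub>L 'a::real_normed_vector) \<Rightarrow> real \<Rightarrow> 'a \<Rightarrow> real" where
  "Kfun i1 t x = Inf {norm (x - blinfun_apply i1 y) + t * norm y | y. True}"

definition interp_integral :: "real \<Rightarrow> real \<Rightarrow> ('b::real_normed_vector \<Rightarrow>\<^sub>L 'a::real_normed_vector) \<Rightarrow> 'a \<Rightarrow> ennreal" where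
  "interp_integral \<theta> p i1 x =
     (\<integral>\<^sup>+ t \<in> {0<..}. ennreal ((t powr (- \<theta>) * Kfun i1 t x) powr p / t) \<partial>lborel)"

definition interp_norm :: "real \<Rightarrow> real \<Rightarrow> ('b::real_normed_vector \<Rightarrow>\<^sub>L 'a::real_normed_vector) \<Rightarrow> 'a \<Rightarrow> real" where
  "interp_norm \<theta> p i1 x = (enn2real (interp_integral \<theta> p i1 x)) powr (1 / p)"

text \<open>js : E_theta \<rightarrow> E0 identifies the Banach space with the real interpolation space
  (E0,E1)_{theta,p} (same elements, equivalent norms).\<close>
definition is_real_interp :: "real \<Rightarrow> real \<Rightarrow> ('b::real_normed_vector \<Rightarrow>\<^sub>L 'a::real_normed_vector)
     \<Rightarrow> ('c::real_normed_vector \<Rightarrow>\<^sub>L 'a) \<Rightarrow> bool" where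
  "is_real_interp \<theta> p i1 js \<longleftrightarrow>
     inj (blinfun_apply js) \<and>
     range (blinfun_apply js) = {x. interp_integral \<theta> p i1 x < \<infinity>} \<and>
     (\<exists>c C. 0 < c \<and> 0 < C \<and> (\<forall>z. c * norm z \<le> interp_norm \<theta> p i1 (js z) \<and>
                                      interp_norm \<theta> p i1 (js z) \<le> C * norm z))"

text \<open>jt : E_theta \<rightarrow> E0 is an admissible intermediate space of exponent theta:
  E1 embeds densely (via i1t), and for theta = 1 it is E1 itself; for theta < 1
  it belongs to the classes J_theta and K_theta (the properties of an interpolation
  functor of exponent theta).\<close>
definition is_admissible_interp :: "real \<Rightarrow> ('b::real_normed_vector \<Rightarrow>\<^sub>L 'a::real_normed_vector)
     \<Rightarrow> ('d::real_normed_vector \<Rightarrow>\<^sub>L 'a) \<Rightarrow> ('b \<Rightarrow>\<^sub>L 'd) \<Rightarrow> bool" where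
  "is_admissible_interp \<theta> i1 jt i1t \<longleftrightarrow>
     inj (blinfun_apply jt) \<and> (\<forall>y. jt (i1t y) = i1 y) \<and> dense_range i1t \<and>
     (\<theta> = 1 \<longrightarrow> surj (blinfun_apply i1t)) \<and>
     (\<theta> < 1 \<longrightarrow>
        (\<exists>C. \<forall>y. norm (i1t y) \<le> C * norm (i1 y) powr (1 - \<theta>) * norm y powr \<theta>) \<and>
        (\<exists>C. \<forall>z. \<forall>t>0. t powr (- \<theta>) * Kfun i1 t (jt z) \<le> C * norm z))"

definition Jset :: "ereal \<Rightarrow> real set" where
  "Jset am = {t. 0 \<le> t \<and> ereal t < am}"

definition strongly_measurable :: "real set \<Rightarrow> (real \<Rightarrow> 'a::real_normed_vector) \<Rightarrow> bool" where
  "strongly_measurable J f \<longleftrightarrow>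
     f \<in> borel_measurable (restrict_space lebesgue J) \<and>
     (\<exists>N D. N \<in> null_sets lebesgue \<and> countable D \<and> f ` (J - N) \<subseteq> closure D)"

definition Lp_fun :: "real \<Rightarrow> real set \<Rightarrow> (real \<Rightarrow> 'a::real_normed_vector) \<Rightarrow> bool" where
  "Lp_fun p J f \<longleftrightarrow> strongly_measurable J f \<and>
     (\<integral>\<^sup>+ t \<in> J. ennreal (norm (f t) powr p) \<partial>lebesgue) < \<infinity>"

definition Lp_norm :: "real \<Rightarrow> real set \<Rightarrow> (real \<Rightarrow> 'a::real_normed_vector) \<Rightarrow> real" where
  "Lp_norm p J f = (enn2real (\<integral>\<^sup>+ t \<in> J. ennreal (norm (f t) powr p) \<partial>lebesgue)) powr (1 / p)"

definition ae_eq_on :: "real set \<Rightarrow> (real \<Rightarrow> 'a) \<Rightarrow> (real \<Rightarrow> 'a) \<Rightarrow> bool" where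
  "ae_eq_on J f g \<longleftrightarrow> (AE t in lebesgue. t \<in> J \<longrightarrow> f t = g t)"

definition test_fun :: "real set \<Rightarrow> (real \<Rightarrow> real) \<Rightarrow> bool" where
  "test_fun J \<phi> \<longleftrightarrow> \<phi> C1_differentiable_on UNIV \<and>
     compact (closure {t. \<phi> t \<noteq> 0}) \<and> closure {t. \<phi> t \<noteq> 0} \<subseteq> interior J"

definition scalar_weak_deriv :: "real set \<Rightarrow> (real \<Rightarrow> real) \<Rightarrow> (real \<Rightarrow> real) \<Rightarrow> bool" where
  "scalar_weak_deriv J g h \<longleftrightarrow> (\<forall>\<phi>. test_fun J \<phi> \<longrightarrow>
     (\<integral> t \<in> J. g t * deriv \<phi> t \<partial>lebesgue) = - (\<integral> t \<in> J. h t * \<phi> t \<partial>lebesgue))"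

text \<open>Weak derivative of a vector-valued function, tested against all continuous
  linear functionals (equivalent to the Bochner-integral definition by Hahn-Banach).\<close>
definition weak_deriv :: "real set \<Rightarrow> (real \<Rightarrow> 'a::real_normed_vector) \<Rightarrow> (real \<Rightarrow> 'a) \<Rightarrow> bool" where
  "weak_deriv J u w \<longleftrightarrow> (\<forall>\<phi> :: 'a \<Rightarrow>\<^sub>L real.
     scalar_weak_deriv J (\<lambda>t. \<phi> (u t)) (\<lambda>t. \<phi> (w t)))"

text \<open>rep identifies the Banach space 'e isometrically with L_p(J,E0)
  (elements are a.e.-classes of p-integrable strongly measurable functions).\<close>
definition is_Lp_space :: "real \<Rightarrow> real set \<Rightarrow> ('e::real_normed_vector \<Rightarrow> real \<Rightarrow> 'a::real_normed_vector) \<Rightarrow> bool" where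
  "is_Lp_space p J rep \<longleftrightarrow>
     (\<forall>x. Lp_fun p J (rep x)) \<and>
     (\<forall>f. Lp_fun p J f \<longrightarrow> (\<exists>x. ae_eq_on J (rep x) f)) \<and>
     (\<forall>x y. ae_eq_on J (rep x) (rep y) \<longrightarrow> x = y) \<and>
     (\<forall>x y. ae_eq_on J (rep (x + y)) (\<lambda>t. rep x t + rep y t)) \<and>
     (\<forall>c x. ae_eq_on J (rep (c *\<^sub>R x)) (\<lambda>t. c *\<^sub>R rep x t)) \<and>
     (\<forall>x. norm x = Lp_norm p J (rep x))"

definition in_W1p :: "real \<Rightarrow> real set \<Rightarrow> ('b::real_normed_vector \<Rightarrow>\<^sub>L 'a::real_normed_vector) \<Rightarrow> (real \<Rightarrow> 'b) \<Rightarrow> bool" where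
  "in_W1p p J i1 u \<longleftrightarrow> Lp_fun p J u \<and>
     (\<exists>w. Lp_fun p J w \<and> weak_deriv J (\<lambda>t. i1 (u t)) w)"

text \<open>rep identifies the Banach space 'f with L_p(J,E1) \<inter> W^1_p(J,E0), with norm
  equivalent to |u|_{L_p(J,E1)} + |u'|_{L_p(J,E0)}.\<close>
definition is_MR_space :: "real \<Rightarrow> real set \<Rightarrow> ('b::real_normed_vector \<Rightarrow>\<^sub>L 'a::real_normed_vector)
     \<Rightarrow> ('f::real_normed_vector \<Rightarrow> real \<Rightarrow> 'b) \<Rightarrow> bool" where
  "is_MR_space p J i1 rep \<longleftrightarrow>
     (\<forall>x. in_W1p p J i1 (rep x)) \<and>
     (\<forall>u. in_W1p p J i1 u \<longrightarrow> (\<exists>x. ae_eq_on J (rep x) u)) \<and>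
     (\<forall>x y. ae_eq_on J (rep x) (rep y) \<longrightarrow> x = y) \<and>
     (\<forall>x y. ae_eq_on J (rep (x + y)) (\<lambda>t. rep x t + rep y t)) \<and>
     (\<forall>c x. ae_eq_on J (rep (c *\<^sub>R x)) (\<lambda>t. c *\<^sub>R rep x t)) \<and>
     (\<exists>c C. 0 < c \<and> 0 < C \<and> (\<forall>x w. Lp_fun p J w \<and> weak_deriv J (\<lambda>t. i1 (rep x t)) w \<longrightarrow>
         c * norm x \<le> Lp_norm p J (rep x) + Lp_norm p J w \<and>
         Lp_norm p J (rep x) + Lp_norm p J w \<le> C * norm x))"

text \<open>The nonlinear map F(lambda,u) = u - S((A(0) - A(u))u, lambda l(u)u); here iota is the
  embedding E1-bold into F-bold and jts the embedding E_vartheta into E_varsigma.\<close>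
definition Fmap :: "('f::real_normed_vector \<Rightarrow>\<^sub>L 'g::real_normed_vector)
     \<Rightarrow> ('g \<Rightarrow> ('f \<Rightarrow>\<^sub>L 'e::real_normed_vector)) \<Rightarrow> ('g \<Rightarrow> ('f \<Rightarrow>\<^sub>L 'd::real_normed_vector))
     \<Rightarrow> ('d \<Rightarrow>\<^sub>L 'c::real_normed_vector) \<Rightarrow> (('e \<times> 'c) \<Rightarrow>\<^sub>L 'f) \<Rightarrow> real \<Rightarrow> 'f \<Rightarrow> 'f" where
  "Fmap \<iota> A ell jts S lam u =
     u - blinfun_apply S (blinfun_apply (A 0) u - blinfun_apply (A (blinfun_apply \<iota> u)) u,
                         lam *\<^sub>R blinfun_apply jts (blinfun_apply (ell (blinfun_apply \<iota> u)) u))"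

end

theory Submission
  imports Defs
begin

lemma Fu_deriv:
  fixes \<iota> :: "'f::banach \<Rightarrow>\<^sub>L 'g::banach" and A :: "'g \<Rightarrow> ('f \<Rightarrow>\<^sub>L 'e::banach)"
    and ell :: "'g \<Rightarrow> ('f \<Rightarrow>\<^sub>L 'd::banach)" and jts :: "'d \<Rightarrow>\<^sub>L 'c::banach"
    and S :: "('e \<times> 'c) \<Rightarrow>\<^sub>L 'f"
  assumes A: "(A has_derivative A') (at 0)" and L: "(ell has_derivative L') (at 0)"
  shows "((\<lambda>u. Fmap \<iota> A ell jts S lam u) has_derivative
          (\<lambda>v. v - lam *\<^sub>R S (0, jts (ell 0 v)))) (at 0)"
proof -
  have i: "(blinfun_apply \<iota> has_derivative blinfun_apply \<iota>) (at 0)"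
    by (rule bounded_linear_imp_has_derivative) (rule blinfun.bounded_linear_right)
  have Ai: "((\<lambda>u. A (\<iota> u)) has_derivative (\<lambda>h. A' (\<iota> h))) (at 0)"
    using has_derivative_compose[OF i, of A A'] A by simp
  have Li: "((\<lambda>u. ell (\<iota> u)) has_derivative (\<lambda>h. L' (\<iota> h))) (at 0)"
    using has_derivative_compose[OF i, of ell L'] L by simp
  have Au: "((\<lambda>u. blinfun_apply (A (\<iota> u)) u) has_derivative (\<lambda>h. A 0 h)) (at 0)"
    using blinfun.FDERIV[OF Ai has_derivative_ident] by simp
  have Lu: "((\<lambda>u. blinfun_apply (ell (\<iota> u)) u) has_derivative (\<lambda>h. ell 0 h)) (at 0)"
    using blinfun.FDERIV[OF Li has_derivative_ident] by simp
  have A0: "((\<lambda>u. blinfun_apply (A 0) u) has_derivative (\<lambda>h. A 0 h)) (at 0)"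
    by (rule bounded_linear_imp_has_derivative) (rule blinfun.bounded_linear_right)
  have P: "((\<lambda>u. (blinfun_apply (A 0) u - blinfun_apply (A (\<iota> u)) u,
                lam *\<^sub>R jts (blinfun_apply (ell (\<iota> u)) u))) has_derivative
           (\<lambda>h. (A 0 h - A 0 h, lam *\<^sub>R jts (ell 0 h)))) (at 0)"
    by (rule has_derivative_Pair[OF has_derivative_diff[OF A0 Au] has_derivative_scaleR_right[OF
          bounded_linear.has_derivative[OF blinfun.bounded_linear_right Lu]]])
  have "((\<lambda>u. S (blinfun_apply (A 0) u - blinfun_apply (A (\<iota> u)) u,
                lam *\<^sub>R jts (blinfun_apply (ell (\<iota> u)) u))) has_derivative
           (\<lambda>h. S (A 0 h - A 0 h, lam *\<^sub>R jts (ell 0 h)))) (at 0)"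
    by (rule bounded_linear.has_derivative[OF blinfun.bounded_linear_right P])
  then have "((\<lambda>u. u - S (blinfun_apply (A 0) u - blinfun_apply (A (\<iota> u)) u,
                lam *\<^sub>R jts (blinfun_apply (ell (\<iota> u)) u))) has_derivative
           (\<lambda>h. h - S (A 0 h - A 0 h, lam *\<^sub>R jts (ell 0 h)))) (at 0)"
    by (rule has_derivative_diff[OF has_derivative_ident])
  moreover have "\<And>h. S (A 0 h - A 0 h, lam *\<^sub>R jts (ell 0 h)) = lam *\<^sub>R S (0, jts (ell 0 h))"
  proof -
    fix h
    have "(A 0 h - A 0 h, lam *\<^sub>R jts (ell 0 h)) = lam *\<^sub>R (0, jts (ell 0 h))" by simp
    then show "S (A 0 h - A 0 h, lam *\<^sub>R jts (ell 0 h)) = lam *\<^sub>R S (0, jts (ell 0 h))"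
      by (simp only: blinfun.scaleR_right)
  qed
  ultimately show ?thesis unfolding Fmap_def by (simp only:)
qed

theorem corollary2p5:
  fixes p theta :: real and am :: ereal
    and K :: "'a::banach set"
    and i1 :: "'b::banach \<Rightarrow>\<^sub>L 'a"
    and js :: "'c::banach \<Rightarrow>\<^sub>L 'a"
    and jt :: "'d::banach \<Rightarrow>\<^sub>L 'a" and i1t :: "'b \<Rightarrow>\<^sub>L 'd" and jts :: "'d \<Rightarrow>\<^sub>L 'c"
    and repE :: "'e::banach \<Rightarrow> real \<Rightarrow> 'a"
    and repF :: "'f::banach \<Rightarrow> real \<Rightarrow> 'b"
    and da :: "'f \<Rightarrow> 'e" and \<gamma>0 :: "'f \<Rightarrow>\<^sub>L 'c"
    and \<iota> :: "'f \<Rightarrow>\<^sub>L 'g::banach" and \<Sigma> :: "'g set"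
    and A :: "'g \<Rightarrow> ('f \<Rightarrow>\<^sub>L 'e)" and ell :: "'g \<Rightarrow> ('f \<Rightarrow>\<^sub>L 'd)"
    and T :: "'f \<Rightarrow> (('e \<times> 'c) \<Rightarrow>\<^sub>L 'f)"
    and lambda0 :: real and \<Phi>0 :: 'c
  assumes ordered: "ordering_cone K"
    and E1_emb: "compact_embedding i1" "dense_range i1"
    and p_range: "1 < p"
    and Es: "is_real_interp (1 - 1 / p) p i1 js"
    and theta: "1 - 1 / p < theta" "theta \<le> 1"
    and Etheta: "is_admissible_interp theta i1 jt i1t"
    and jts: "\<forall>z. js (jts z) = jt z"
    and int_pos: "interior {x. js x \<in> K} \<noteq> {}"
    and am: "0 < am"
    and E0bold: "is_Lp_space p (Jset am) repE"
    and E1bold: "is_MR_space p (Jset am) i1 repF"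
    and da: "\<forall>u. weak_deriv (Jset am) (\<lambda>t. i1 (repF u t)) (repE (da u))"
    and trace: "\<forall>u v. continuous_on (Jset am) v \<and> ae_eq_on (Jset am) v (\<lambda>t. i1 (repF u t))
                   \<longrightarrow> js (\<gamma>0 u) = v 0"
    and Fbold: "compact_embedding \<iota>"
    and Sigma: "open \<Sigma>" "connected \<Sigma>" "0 \<in> \<Sigma>"
    and A_C1: "C1_on \<Sigma> A"
    and l_C1: "C1_on \<Sigma> ell"
    and T_inv: "\<forall>u. \<iota> u \<in> \<Sigma> \<longrightarrow>
                 (\<forall>w. T u (da w + A (\<iota> u) w, \<gamma>0 w) = w) \<and>
                 (\<forall>f x. da (T u (f, x)) + A (\<iota> u) (T u (f, x)) = f \<and> \<gamma>0 (T u (f, x)) = x)"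
    and T_pos: "\<forall>u. \<iota> u \<in> \<Sigma> \<longrightarrow> (\<forall>x. js x \<in> K \<longrightarrow>
                 (AE t in lebesgue. t \<in> Jset am \<longrightarrow> i1 (repF (T u (0, x)) t) \<in> K))"
    and lam0: "0 < lambda0"
    and simple: "simple_eigenvalue (\<lambda>x. jts (ell 0 (T 0 (0, x)))) (inverse lambda0)"
    and eigvec: "is_eigenvector (\<lambda>x. jts (ell 0 (T 0 (0, x)))) (inverse lambda0) \<Phi>0"
    and Phi0_int: "\<Phi>0 \<in> interior {x. js x \<in> K}"
    and no_other: "\<forall>\<mu> x. is_eigenvector (\<lambda>x. jts (ell 0 (T 0 (0, x)))) \<mu> x \<and> js x \<in> K
                     \<longrightarrow> \<mu> = inverse lambda0"
  shows "(\<exists>Fu :: real \<Rightarrow> ('f \<Rightarrow>\<^sub>L 'f). \<exists>Flu :: 'f \<Rightarrow>\<^sub>L 'f.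
            (\<forall>lam. ((\<lambda>u. Fmap \<iota> A ell jts (T 0) lam u) has_derivative blinfun_apply (Fu lam)) (at 0)) \<and>
            (Fu has_derivative (\<lambda>s. s *\<^sub>R Flu)) (at lambda0)) \<and>
         (\<forall>(Fu :: real \<Rightarrow> ('f \<Rightarrow>\<^sub>L 'f)) (Flu :: 'f \<Rightarrow>\<^sub>L 'f).
            (\<forall>lam. ((\<lambda>u. Fmap \<iota> A ell jts (T 0) lam u) has_derivative blinfun_apply (Fu lam)) (at 0)) \<and>
            (Fu has_derivative (\<lambda>s. s *\<^sub>R Flu)) (at lambda0) \<longrightarrow>
            {v. Fu lambda0 v = 0} = range (\<lambda>t. t *\<^sub>R T 0 (0, \<Phi>0)) \<and>
            Flu (T 0 (0, \<Phi>0)) \<notin> range (blinfun_apply (Fu lambda0)))"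
proof -
  define S where "S = T 0"
  obtain A' where A': "\<forall>x\<in>\<Sigma>. (A has_derivative blinfun_apply (A' x)) (at x)"
    using A_C1 unfolding C1_on_def by blast
  obtain L' where L': "\<forall>x\<in>\<Sigma>. (ell has_derivative blinfun_apply (L' x)) (at x)"
    using l_C1 unfolding C1_on_def by blast
  have A0: "(A has_derivative blinfun_apply (A' 0)) (at 0)" using A' Sigma(3) by blast
  have L0: "(ell has_derivative blinfun_apply (L' 0)) (at 0)" using L' Sigma(3) by blast
  have blSv: "bounded_linear (\<lambda>x. S (0::'e, x))"
    using bounded_linear_compose[OF blinfun.bounded_linear_right[of S]
        bounded_linear_Pair[OF bounded_linear_zero bounded_linear_ident]] by simp
  define Sv where "Sv = Blinfun (\<lambda>x. S (0::'e, x))"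
  have Sv: "\<And>x. Sv x = S (0, x)" unfolding Sv_def using blSv by (simp add: bounded_linear_Blinfun_apply)
  define B where "B = Sv o\<^sub>L jts o\<^sub>L ell 0"
  have B: "\<And>v. B v = S (0, jts (ell 0 v))" unfolding B_def by (simp add: Sv)
  define Qb where "Qb = jts o\<^sub>L ell 0 o\<^sub>L Sv"
  have Qb: "\<And>x. Qb x = jts (ell 0 (T 0 (0, x)))" unfolding Qb_def by (simp add: Sv S_def)
  have Qf: "blinfun_apply Qb = (\<lambda>x. jts (ell 0 (T 0 (0, x))))" by (rule ext) (simp add: Qb)
  define \<mu> where "\<mu> = inverse lambda0"
  have i0: "\<iota> 0 \<in> \<Sigma>" using Sigma(3) by simp
  have gam: "\<And>x. \<gamma>0 (Sv x) = x" using T_inv i0 by (simp add: Sv S_def)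
  have SvB: "\<And>x. B (Sv x) = Sv (Qb x)" by (simp add: B Qb Sv S_def)
  have BSv: "\<And>v. B v = Sv (jts (ell 0 v))" by (simp add: B Sv)
  have QPhi: "Qb \<Phi>0 = \<mu> *\<^sub>R \<Phi>0" and Phi0nz: "\<Phi>0 \<noteq> 0"
    using eigvec unfolding is_eigenvector_def \<mu>_def Qf by simp_all
  have GE: "gen_eigenspace Qb \<mu> = range (\<lambda>t. t *\<^sub>R \<Phi>0)"
  proof -
    obtain e where e: "e \<noteq> 0" "gen_eigenspace Qb \<mu> = range (\<lambda>t. t *\<^sub>R e)"
      using simple unfolding simple_eigenvalue_def \<mu>_def Qf by blast
    have "\<Phi>0 \<in> gen_eigenspace Qb \<mu>" unfolding gen_eigenspace_def
      by (rule CollectI, rule exI[of _ 1]) (simp add: QPhi)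
    then obtain c where c: "\<Phi>0 = c *\<^sub>R e" using e by auto
    with Phi0nz have "c \<noteq> 0" by auto
    have "range (\<lambda>t. t *\<^sub>R e) = range (\<lambda>t. t *\<^sub>R \<Phi>0)"
    proof
      show "range (\<lambda>t. t *\<^sub>R e) \<subseteq> range (\<lambda>t. t *\<^sub>R \<Phi>0)"
      proof
        fix x assume "x \<in> range (\<lambda>t. t *\<^sub>R e)"
        then obtain t where "x = t *\<^sub>R e" by auto
        then have "x = (t / c) *\<^sub>R \<Phi>0" using c \<open>c \<noteq> 0\<close> by simp
        then show "x \<in> range (\<lambda>t. t *\<^sub>R \<Phi>0)" by auto
      qed
      show "range (\<lambda>t. t *\<^sub>R \<Phi>0) \<subseteq> range (\<lambda>t. t *\<^sub>R e)"
        using c by (auto intro!: image_eqI[where x="_ * c"])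
    qed
    with e show ?thesis by simp
  qed
  define Fu0 where "Fu0 = (\<lambda>lam::real. id_blinfun - lam *\<^sub>R B)"
  have Fu0: "\<And>lam v. Fu0 lam v = v - lam *\<^sub>R B v"
    unfolding Fu0_def by (simp add: blinfun.diff_left blinfun.scaleR_left)
  have dU: "\<And>lam. ((\<lambda>u. Fmap \<iota> A ell jts (T 0) lam u) has_derivative blinfun_apply (Fu0 lam)) (at 0)"
  proof -
    fix lam
    have "(\<lambda>v. v - lam *\<^sub>R T 0 (0, jts (ell 0 v))) = blinfun_apply (Fu0 lam)"
      by (rule ext) (simp add: Fu0 B S_def)
    with Fu_deriv[OF A0 L0, of \<iota> jts "T 0" lam] show "?thesis lam" by simp
  qed
  have dL: "(Fu0 has_derivative (\<lambda>s. s *\<^sub>R (- B))) (at lambda0)"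
  proof -
    have "((\<lambda>lam::real. lam *\<^sub>R B) has_derivative (\<lambda>s. s *\<^sub>R B)) (at lambda0)"
      by (rule bounded_linear_imp_has_derivative) (rule bounded_linear_scaleR_left)
    from has_derivative_diff[OF has_derivative_const[of id_blinfun] this]
    show ?thesis unfolding Fu0_def by simp
  qed
  have part2: "{v. Fu0 lambda0 v = 0} = range (\<lambda>t. t *\<^sub>R T 0 (0, \<Phi>0)) \<and>
            (- B) (T 0 (0, \<Phi>0)) \<notin> range (blinfun_apply (Fu0 lambda0))"
  proof
    have lm: "lambda0 * \<mu> = 1" using lam0 by (simp add: \<mu>_def)
    show "{v. Fu0 lambda0 v = 0} = range (\<lambda>t. t *\<^sub>R T 0 (0, \<Phi>0))"
    proof
      show "{v. Fu0 lambda0 v = 0} \<subseteq> range (\<lambda>t. t *\<^sub>R T 0 (0, \<Phi>0))"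
      proof
        fix v assume "v \<in> {v. Fu0 lambda0 v = 0}"
        then have v: "v = lambda0 *\<^sub>R B v" by (simp add: Fu0)
        define y where "y = lambda0 *\<^sub>R jts (ell 0 v)"
        have vy: "v = Sv y" using v by (simp add: y_def BSv blinfun.scaleR_right)
        have "Qb y = jts (ell 0 v)" using vy by (simp add: Qb Sv S_def)
        then have "Qb y = \<mu> *\<^sub>R y" using lam0 by (simp add: y_def \<mu>_def)
        then have "y \<in> gen_eigenspace Qb \<mu>" unfolding gen_eigenspace_def
          by (intro CollectI exI[of _ 1]) simp
        then obtain t where "y = t *\<^sub>R \<Phi>0" using GE by auto
        then have "v = t *\<^sub>R T 0 (0, \<Phi>0)" using vy by (simp add: blinfun.scaleR_right Sv S_def)
        then show "v \<in> range (\<lambda>t. t *\<^sub>R T 0 (0, \<Phi>0))" by auto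
      qed
      show "range (\<lambda>t. t *\<^sub>R T 0 (0, \<Phi>0)) \<subseteq> {v. Fu0 lambda0 v = 0}"
      proof
        fix v assume "v \<in> range (\<lambda>t. t *\<^sub>R T 0 (0, \<Phi>0))"
        then obtain t where t: "v = t *\<^sub>R Sv \<Phi>0" by (auto simp: Sv S_def)
        have "B v = (t * \<mu>) *\<^sub>R Sv \<Phi>0"
          by (simp add: t blinfun.scaleR_right SvB QPhi)
        then have "lambda0 *\<^sub>R B v = v" using lm by (simp add: t mult.left_commute)
        then show "v \<in> {v. Fu0 lambda0 v = 0}" by (simp add: Fu0)
      qed
    qed
    show "(- B) (T 0 (0, \<Phi>0)) \<notin> range (blinfun_apply (Fu0 lambda0))"
    proof
      assume "(- B) (T 0 (0, \<Phi>0)) \<in> range (blinfun_apply (Fu0 lambda0))"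
      then obtain w where w: "- B (Sv \<Phi>0) = w - lambda0 *\<^sub>R B w"
        by (auto simp: Fu0 Sv S_def blinfun.minus_left)
      have BP: "B (Sv \<Phi>0) = \<mu> *\<^sub>R Sv \<Phi>0" by (simp add: SvB QPhi blinfun.scaleR_right)
      define y where "y = lambda0 *\<^sub>R jts (ell 0 w) - \<mu> *\<^sub>R \<Phi>0"
      have wy: "w = Sv y"
      proof -
        have "w = lambda0 *\<^sub>R B w - B (Sv \<Phi>0)" using w by (simp add: algebra_simps)
        then have "w = lambda0 *\<^sub>R B w - \<mu> *\<^sub>R Sv \<Phi>0" by (simp only: BP)
        then show ?thesis by (simp add: y_def BSv blinfun.scaleR_right blinfun.diff_right)
      qed
      have "Qb y = jts (ell 0 w)" using wy by (simp add: Qb Sv S_def)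
      then have "lambda0 *\<^sub>R Qb y = y + \<mu> *\<^sub>R \<Phi>0" by (simp add: y_def)
      then have "\<mu> *\<^sub>R (lambda0 *\<^sub>R Qb y) = \<mu> *\<^sub>R (y + \<mu> *\<^sub>R \<Phi>0)" by simp
      then have Qy: "Qb y - \<mu> *\<^sub>R y = (\<mu> * \<mu>) *\<^sub>R \<Phi>0"
        using lm by (simp add: algebra_simps)
      have "Qb (Qb y - \<mu> *\<^sub>R y) - \<mu> *\<^sub>R (Qb y - \<mu> *\<^sub>R y) = 0"
        by (simp add: Qy blinfun.scaleR_right QPhi)
      then have "y \<in> gen_eigenspace Qb \<mu>" unfolding gen_eigenspace_def
        by (intro CollectI exI[of _ 2]) (simp add: numeral_2_eq_2)
      then obtain t where "y = t *\<^sub>R \<Phi>0" using GE by auto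
      then have "Qb y - \<mu> *\<^sub>R y = 0" by (simp add: blinfun.scaleR_right QPhi)
      with Qy have "(\<mu> * \<mu>) *\<^sub>R \<Phi>0 = 0" by simp
      moreover have "\<mu> \<noteq> 0" using lam0 by (simp add: \<mu>_def)
      ultimately show False using Phi0nz by simp
    qed
  qed
  show ?thesis
  proof
    show "\<exists>Fu :: real \<Rightarrow> ('f \<Rightarrow>\<^sub>L 'f). \<exists>Flu :: 'f \<Rightarrow>\<^sub>L 'f.
            (\<forall>lam. ((\<lambda>u. Fmap \<iota> A ell jts (T 0) lam u) has_derivative blinfun_apply (Fu lam)) (at 0)) \<and>
            (Fu has_derivative (\<lambda>s. s *\<^sub>R Flu)) (at lambda0)"
      using dU dL by blast
  next
    show "\<forall>(Fu :: real \<Rightarrow> ('f \<Rightarrow>\<^sub>L 'f)) (Flu :: 'f \<Rightarrow>\<^sub>L 'f).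
            (\<forall>lam. ((\<lambda>u. Fmap \<iota> A ell jts (T 0) lam u) has_derivative blinfun_apply (Fu lam)) (at 0)) \<and>
            (Fu has_derivative (\<lambda>s. s *\<^sub>R Flu)) (at lambda0) \<longrightarrow>
            {v. Fu lambda0 v = 0} = range (\<lambda>t. t *\<^sub>R T 0 (0, \<Phi>0)) \<and>
            Flu (T 0 (0, \<Phi>0)) \<notin> range (blinfun_apply (Fu lambda0))"
    proof (intro allI impI)
      fix Fu :: "real \<Rightarrow> ('f \<Rightarrow>\<^sub>L 'f)" and Flu :: "'f \<Rightarrow>\<^sub>L 'f"
      assume H: "(\<forall>lam. ((\<lambda>u. Fmap \<iota> A ell jts (T 0) lam u) has_derivative blinfun_apply (Fu lam)) (at 0)) \<and>
            (Fu has_derivative (\<lambda>s. s *\<^sub>R Flu)) (at lambda0)"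
      have "\<And>lam. Fu lam = Fu0 lam"
      proof -
        fix lam
        have "blinfun_apply (Fu lam) = blinfun_apply (Fu0 lam)"
          using has_derivative_unique[OF conjunct1[OF H, rule_format, of lam] dU] .
        then show "Fu lam = Fu0 lam" by (simp add: blinfun_apply_inject)
      qed
      then have FF: "Fu = Fu0" by (rule ext)
      have "(\<lambda>s. s *\<^sub>R Flu) = (\<lambda>s::real. s *\<^sub>R (- B))"
        using has_derivative_unique[OF conjunct2[OF H] dL[folded FF]] .
      then have "Flu = - B" by (metis scaleR_one)
      with FF part2 show "{v. Fu lambda0 v = 0} = range (\<lambda>t. t *\<^sub>R T 0 (0, \<Phi>0)) \<and>
            Flu (T 0 (0, \<Phi>0)) \<notin> range (blinfun_apply (Fu lambda0))" by simp
    qed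
  qed
qed

end
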